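(* Let $A$ be a synaptic algebra, let $p,q\in P$ be arbitrary projections, and let $c:=(pqp+p^{\perp}q^{\perp}p^{\perp})^{1/2}$ and $s:=(pq^{\perp}p+p^{\perp}qp^{\perp})^{1/2}$. Let $k$ be the symmetry of the polar decomposition of $pqp^{\perp}+p^{\perp}qp\in A$, so that $pqp^{\perp}+p^{\perp}qp=csk=kcs$ (here $cs=|pqp^{\perp}+p^{\perp}qp|$). Then \[ q=c^{2}p+csk+s^{2}p^{\perp}, \] where $pqp=c^{2}p=pc^{2}$, $p^{\perp}qp^{\perp}=s^{2}p^{\perp}=p^{\perp}s^{2}$, $pqp^{\perp}+p^{\perp}qp=csk$, $k$ is a symmetry, $cCs$, $cCk$, $sCk$, and $k\in CC(pqp^{\perp}+p^{\perp}qp)$.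
   Context: Synaptic algebra (Foulis): $R$ is a real linear associative algebra with unit $1$, and $A\subseteq R$ is a real linear subspace with $1\in A$. For $a,b\in A$ write $aCb$ iff $ab=ba$; $C(a):=\{b\in A: aCb\}$; $CC(a):=\{b\in A: bCd \text{ for all } d\in C(a)\}$. $A$ is a synaptic algebra with enveloping algebra $R$ iff: (SA1) $A$ is a partially ordered archimedean real linear space with positive cone $A^+=\{a\in A:0\le a\}$, $1$ is an order unit, and $\|\cdot\|$ is the corresponding order-unit norm; (SA2) $a\in A\Rightarrow a^2\in A^+$; (SA3) $a,b\in A^+\Rightarrow aba\in A^+$; (SA4) if $a\in A$, $b\in A^+$ and $aba=0$ then $ab=ba=0$; (SA5) if $a\in A^+$ there is $b\in A^+\cap CC(a)$ with $b^2=a$; (SA6) for $a\in A$ there is $p\in A$ with $p=p^2$ and, for all $b\in A$, $ab=0\Leftrightarrow pb=0$; (SA7) if $1\le a\in A$ there is $b\in A$ with $ab=ba=1$; (SA8) if $a,b\in A$, $a_1\le a_2\le\cdots$ are pairwise commuting elements of $C(b)$ and $\|a-a_n\|\to0$, then $a\in C(b)$. $A$ is assumed nondegenerate ($1\ne0$). Products are computed in $R$ (for $a,b,d\in A$ one has $aba\in A$, $ab+ba\in A$, and $ab\in A$ when $aCb$). $P:=\{p\in A:p=p^2\}$ is the set of projections, partially ordered by the restriction of $\le$; it is an orthomodular lattice with orthocomplement $p^{\perp}:=1-p$, meet $\wedge$, join $\vee$. For $0\le a$, $a^{1/2}$ is the unique $b\in A^+$ with $b^2=a$, and $|a|:=(a^2)^{1/2}$.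 The carrier $a^{\circ}$ of $a\in A$ is the unique projection such that for all $b\in A$, $ab=0\Leftrightarrow a^{\circ}b=0$. A symmetry is $u\in A$ with $u^2=1$. For $a\in A$, the signum of $a$ is the partial symmetry $t\in A$ with $t^2=a^{\circ}$, $t\in CC(a)$, $a=|a|t=t|a|$; the symmetry of the polar decomposition of $a$ is $u:=t+(a^{\circ})^{\perp}$, which satisfies $u^2=1$, $u\in CC(a)$, $a=|a|u=u|a|$, $|a|=ua=au$. *)

theory Defs
  imports Main "HOL.Real_Vector_Spaces"
begin

text \<open>Synaptic algebras (Foulis). The enveloping algebra R is the whole type
'a (a real associative algebra with unit); A is a subset of it; le is the
partial order on A (only relating elements of A).\<close>

definition sa_C :: "'a::real_algebra_1 set \<Rightarrow> 'a \<Rightarrow> 'a set" where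
  "sa_C A a = {b \<in> A. a * b = b * a}"

definition sa_CC :: "'a::real_algebra_1 set \<Rightarrow> 'a \<Rightarrow> 'a set" where
  "sa_CC A a = {b \<in> A. \<forall>d \<in> sa_C A a. b * d = d * b}"

definition sa_norm :: "'a::real_algebra_1 set \<Rightarrow> ('a \<Rightarrow> 'a \<Rightarrow> bool) \<Rightarrow> 'a \<Rightarrow> real" where
  "sa_norm A le a = Inf {r::real. 0 < r \<and> le (- (r *\<^sub>R 1)) a \<and> le a (r *\<^sub>R 1)}"

definition synaptic_algebra :: "'a::real_algebra_1 set \<Rightarrow> ('a \<Rightarrow> 'a \<Rightarrow> bool) \<Rightarrow> bool" where
  "synaptic_algebra A le \<longleftrightarrow>
     \<comment> \<open>A is a real linear subspace of R containing 1\<close>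
     0 \<in> A \<and> 1 \<in> A \<and> (\<forall>a\<in>A. \<forall>b\<in>A. a + b \<in> A) \<and> (\<forall>a\<in>A. \<forall>r::real. r *\<^sub>R a \<in> A)
     \<comment> \<open>nondegenerate\<close>
   \<and> (1::'a) \<noteq> 0
     \<comment> \<open>(SA1) partially ordered real linear space\<close>
   \<and> (\<forall>a b. le a b \<longrightarrow> a \<in> A \<and> b \<in> A)
   \<and> (\<forall>a\<in>A. le a a)
   \<and> (\<forall>a b. le a b \<and> le b a \<longrightarrow> a = b)
   \<and> (\<forall>a b c. le a b \<and> le b c \<longrightarrow> le a c)
   \<and> (\<forall>a b c. le a b \<and> c \<in> A \<longrightarrow> le (a + c) (b + c))
   \<and> (\<forall>a b (r::real). le a b \<and> 0 \<le> r \<longrightarrow> le (r *\<^sub>R a) (r *\<^sub>R b))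
     \<comment> \<open>(SA1) archimedean\<close>
   \<and> (\<forall>a\<in>A. \<forall>b\<in>A. (\<forall>n::nat. le (real n *\<^sub>R a) b) \<longrightarrow> le a 0)
     \<comment> \<open>(SA1) 1 is an order unit\<close>
   \<and> (\<forall>a\<in>A. \<exists>r::real. le a (r *\<^sub>R 1))
     \<comment> \<open>(SA2)\<close>
   \<and> (\<forall>a\<in>A. le 0 (a * a))
     \<comment> \<open>(SA3)\<close>
   \<and> (\<forall>a b. le 0 a \<and> le 0 b \<longrightarrow> le 0 (a * b * a))
     \<comment> \<open>(SA4)\<close>
   \<and> (\<forall>a\<in>A. \<forall>b. le 0 b \<and> a * b * a = 0 \<longrightarrow> a * b = 0 \<and> b * a = 0)
     \<comment> \<open>(SA5)\<close>
   \<and> (\<forall>a. le 0 a \<longrightarrow> (\<exists>b. le 0 b \<and> b \<in> sa_CC A a \<and> b * b = a))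
     \<comment> \<open>(SA6)\<close>
   \<and> (\<forall>a\<in>A. \<exists>p\<in>A. p * p = p \<and> (\<forall>b\<in>A. a * b = 0 \<longleftrightarrow> p * b = 0))
     \<comment> \<open>(SA7)\<close>
   \<and> (\<forall>a. le 1 a \<longrightarrow> (\<exists>b\<in>A. a * b = 1 \<and> b * a = 1))
     \<comment> \<open>(SA8)\<close>
   \<and> (\<forall>a\<in>A. \<forall>b\<in>A. \<forall>f::nat \<Rightarrow> 'a.
        (\<forall>n. f n \<in> sa_C A b) \<and> (\<forall>m n. f m * f n = f n * f m)
        \<and> (\<forall>n. le (f n) (f (Suc n)))
        \<and> (\<lambda>n. sa_norm A le (a - f n)) \<longlonglongrightarrow> 0
        \<longrightarrow> a \<in> sa_C A b)"

definition sa_proj :: "'a::real_algebra_1 set \<Rightarrow> 'a \<Rightarrow> bool" where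
  "sa_proj A p \<longleftrightarrow> p \<in> A \<and> p * p = p"

definition sa_sqrt :: "'a::real_algebra_1 set \<Rightarrow> ('a \<Rightarrow> 'a \<Rightarrow> bool) \<Rightarrow> 'a \<Rightarrow> 'a" where
  "sa_sqrt A le a = (THE b. le 0 b \<and> b * b = a)"

definition sa_abs :: "'a::real_algebra_1 set \<Rightarrow> ('a \<Rightarrow> 'a \<Rightarrow> bool) \<Rightarrow> 'a \<Rightarrow> 'a" where
  "sa_abs A le a = sa_sqrt A le (a * a)"

definition sa_carrier :: "'a::real_algebra_1 set \<Rightarrow> 'a \<Rightarrow> 'a" where
  "sa_carrier A a = (THE p. sa_proj A p \<and> (\<forall>b\<in>A. a * b = 0 \<longleftrightarrow> p * b = 0))"

definition sa_signum :: "'a::real_algebra_1 set \<Rightarrow> ('a \<Rightarrow> 'a \<Rightarrow> bool) \<Rightarrow> 'a \<Rightarrow> 'a" where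
  "sa_signum A le a = (THE t. t \<in> A \<and> t * t = sa_carrier A a \<and> t \<in> sa_CC A a
       \<and> a = sa_abs A le a * t \<and> a = t * sa_abs A le a)"

definition sa_polar_sym :: "'a::real_algebra_1 set \<Rightarrow> ('a \<Rightarrow> 'a \<Rightarrow> bool) \<Rightarrow> 'a \<Rightarrow> 'a" where
  "sa_polar_sym A le a = sa_signum A le a + (1 - sa_carrier A a)"

end

theory Submission
  imports Defs
begin

lemma ring_ids:
  fixes p q :: "'a::ring_1"
  assumes pp: "p * p = p" and qq: "q * q = q"
  defines "X \<equiv> p * q * p + (1 - p) * (1 - q) * (1 - p)"
    and "Y \<equiv> p * (1 - q) * p + (1 - p) * q * (1 - p)"
    and "d \<equiv> p * q * (1 - p) + (1 - p) * q * p"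
  shows "X * p = p * q * p" "p * X = p * q * p"
    "Y * (1 - p) = (1 - p) * q * (1 - p)" "(1 - p) * Y = (1 - p) * q * (1 - p)"
    "X + Y = 1" "X * d = d * X" "X * Y = d * d"
    "q = X * p + d + Y * (1 - p)"
proof -
  have pp2: "\<And>z. p * (p * z) = p * z" using pp by (metis mult.assoc)
  have qq2: "\<And>z. q * (q * z) = q * z" using qq by (metis mult.assoc)
  note S = algebra_simps pp pp2 qq qq2
  show "X * p = p * q * p" unfolding X_def by (simp add: S)
  show "p * X = p * q * p" unfolding X_def by (simp add: S)
  show "Y * (1 - p) = (1 - p) * q * (1 - p)" unfolding Y_def by (simp add: S)
  show "(1 - p) * Y = (1 - p) * q * (1 - p)" unfolding Y_def by (simp add: S)
  show "X + Y = 1" unfolding X_def Y_def by (simp add: S)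
  show "X * d = d * X" unfolding X_def d_def by (simp add: S)
  show "X * Y = d * d" unfolding X_def Y_def d_def by (simp add: S)
  show "q = X * p + d + Y * (1 - p)" unfolding X_def Y_def d_def by (simp add: S)
qed

locale synalg =
  fixes A :: "'a::real_algebra_1 set" and le :: "'a \<Rightarrow> 'a \<Rightarrow> bool"
  assumes ax0: "0 \<in> A" and ax1: "1 \<in> A" and axadd: "\<forall>a\<in>A. \<forall>b\<in>A. a + b \<in> A"
   and axscale: "\<forall>a\<in>A. \<forall>r::real. r *\<^sub>R a \<in> A"
   and axle: "\<forall>a b. le a b \<longrightarrow> a \<in> A \<and> b \<in> A"
   and axanti: "\<forall>a b. le a b \<and> le b a \<longrightarrow> a = b"
   and axtrans: "\<forall>a b c. le a b \<and> le b c \<longrightarrow> le a c"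
   and axmono: "\<forall>a b c. le a b \<and> c \<in> A \<longrightarrow> le (a + c) (b + c)"
   and ax2: "\<forall>a\<in>A. le 0 (a * a)"
   and ax3: "\<forall>a b. le 0 a \<and> le 0 b \<longrightarrow> le 0 (a * b * a)"
   and ax4: "\<forall>a\<in>A. \<forall>b. le 0 b \<and> a * b * a = 0 \<longrightarrow> a * b = 0 \<and> b * a = 0"
   and ax5: "\<forall>a. le 0 a \<longrightarrow> (\<exists>b. le 0 b \<and> b \<in> sa_CC A a \<and> b * b = a)"
   and ax6: "\<forall>a\<in>A. \<exists>p\<in>A. p * p = p \<and> (\<forall>b\<in>A. a * b = 0 \<longleftrightarrow> p * b = 0)"
begin

lemma zeroA: "0 \<in> A" using ax0 by blast
lemma oneA: "1 \<in> A" using ax1 by blast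
lemma addA: "a \<in> A \<Longrightarrow> b \<in> A \<Longrightarrow> a + b \<in> A" using axadd by blast
lemma scaleA: "a \<in> A \<Longrightarrow> r *\<^sub>R a \<in> A" using axscale by blast
lemma leA: "le a b \<Longrightarrow> a \<in> A \<and> b \<in> A" using axle by blast
lemma antisym: "le a b \<Longrightarrow> le b a \<Longrightarrow> a = b" using axanti by blast
lemma trans: "le a b \<Longrightarrow> le b c \<Longrightarrow> le a c" using axtrans by blast
lemma addmono: "le a b \<Longrightarrow> c \<in> A \<Longrightarrow> le (a + c) (b + c)" using axmono by blast
lemma sqpos: "a \<in> A \<Longrightarrow> le 0 (a * a)" using ax2 by blast
lemma sa3: "le 0 a \<Longrightarrow> le 0 b \<Longrightarrow> le 0 (a * b * a)" using ax3 by blast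
lemma sa4: "a \<in> A \<Longrightarrow> le 0 b \<Longrightarrow> a * b * a = 0 \<Longrightarrow> a * b = 0 \<and> b * a = 0" using ax4 by blast
lemma sa5: "le 0 a \<Longrightarrow> \<exists>b. le 0 b \<and> b \<in> sa_CC A a \<and> b * b = a" using ax5 by blast
lemma sa6: "a \<in> A \<Longrightarrow> \<exists>p\<in>A. p * p = p \<and> (\<forall>b\<in>A. a * b = 0 \<longleftrightarrow> p * b = 0)" using ax6 by blast

lemma negA: "a \<in> A \<Longrightarrow> - a \<in> A"
  using scaleA[of a "-1"] by simp

lemma diffA: "a \<in> A \<Longrightarrow> b \<in> A \<Longrightarrow> a - b \<in> A"
proof -
  assume "a \<in> A" "b \<in> A"
  then have "a + - b \<in> A" using addA negA by blast
  then show ?thesis by simp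
qed

lemma sqA: "a \<in> A \<Longrightarrow> a * a \<in> A"
  using sqpos leA by blast

definition J :: "'a \<Rightarrow> 'a \<Rightarrow> 'a" where "J x y = x * y + y * x"

lemma JA: "a \<in> A \<Longrightarrow> b \<in> A \<Longrightarrow> a * b + b * a \<in> A"
proof -
  assume a: "a \<in> A" and b: "b \<in> A"
  have "a * b + b * a = (a + b) * (a + b) - a * a - b * b"
    by (simp add: algebra_simps)
  then show ?thesis using a b by (simp add: diffA addA sqA)
qed

lemma commA: "a \<in> A \<Longrightarrow> b \<in> A \<Longrightarrow> a * b = b * a \<Longrightarrow> a * b \<in> A"
proof -
  assume a: "a \<in> A" and b: "b \<in> A" and c: "a * b = b * a"
  have "a * b = (1/2) *\<^sub>R (a * b + b * a)" using c by simp
  then show ?thesis using JA[OF a b] scaleA by metis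
qed

lemma tripA: "a \<in> A \<Longrightarrow> b \<in> A \<Longrightarrow> a * b * a \<in> A"
proof -
  assume a: "a \<in> A" and b: "b \<in> A"
  have "a * b * a + a * b * a = (a * (a * b + b * a) + (a * b + b * a) * a) - ((a * a) * b + b * (a * a))"
    by (simp add: algebra_simps)
  moreover have "\<dots> \<in> A" using a b by (intro diffA JA sqA)
  ultimately have "(1/2) *\<^sub>R (a * b * a + a * b * a) \<in> A" using scaleA by metis
  then show ?thesis by simp
qed

lemma oneA_pos: "le 0 1"
  using sqpos[OF oneA] by simp

lemma pos_add: "le 0 a \<Longrightarrow> le 0 b \<Longrightarrow> le 0 (a + b)"
proof -
  assume a: "le 0 a" and b: "le 0 b"
  have "le (0 + b) (a + b)" using addmono[OF a] leA[OF b] by blast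
  then show ?thesis using trans b by simp
qed

lemma pos_sum_zero: "le 0 a \<Longrightarrow> le 0 b \<Longrightarrow> a + b = 0 \<Longrightarrow> a = 0"
proof -
  assume a: "le 0 a" and b: "le 0 b" and s: "a + b = 0"
  have "le (0 + a) (b + a)" using addmono[OF b] leA[OF a] by blast
  then have "le a 0" using s by (simp add: add.commute)
  then show ?thesis using antisym a by blast
qed

lemma zero_sq: "a \<in> A \<Longrightarrow> a * a = 0 \<Longrightarrow> a = 0"
  using sa4[OF _ oneA_pos, of a] by simp

lemma ann_swap: "a \<in> A \<Longrightarrow> le 0 b \<Longrightarrow> a * b = 0 \<Longrightarrow> b * a = 0"
  using sa4 by (metis mult_zero_left)

lemma ann_swap2: "a \<in> A \<Longrightarrow> le 0 b \<Longrightarrow> b * a = 0 \<Longrightarrow> a * b = 0"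
  using sa4 by (metis mult.assoc mult_zero_right)

lemma proj_pos: "sa_proj A e \<Longrightarrow> le 0 e"
  unfolding sa_proj_def using sqpos by metis

lemma proj_compl: "sa_proj A e \<Longrightarrow> sa_proj A (1 - e)"
  unfolding sa_proj_def by (auto simp: diffA oneA algebra_simps)

lemma CC_A: "y \<in> sa_CC A a \<Longrightarrow> y \<in> A"
  unfolding sa_CC_def by auto

lemma CC_comm: "y \<in> sa_CC A a \<Longrightarrow> z \<in> A \<Longrightarrow> a * z = z * a \<Longrightarrow> y * z = z * y"
  unfolding sa_CC_def sa_C_def by auto

lemma CC_self: "y \<in> sa_CC A a \<Longrightarrow> a \<in> A \<Longrightarrow> y * a = a * y"
  using CC_comm by blast

lemma comm_pos: "le 0 a \<Longrightarrow> le 0 b \<Longrightarrow> a * b = b * a \<Longrightarrow> le 0 (a * b)"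
proof -
  assume a: "le 0 a" and b: "le 0 b" and c: "a * b = b * a"
  obtain w where w: "le 0 w" "w \<in> sa_CC A a" "w * w = a" using sa5[OF a] by blast
  have wb: "w * b = b * w" using CC_comm[OF w(2)] leA[OF b] c by blast
  have "a * b = w * b * w" using w(3) wb by (metis mult.assoc)
  then show ?thesis using sa3[OF w(1) b] by simp
qed

lemma C_self: "a \<in> A \<Longrightarrow> a \<in> sa_C A a"
  unfolding sa_C_def by simp

lemma sqrt_wit:
  assumes b: "le 0 b" and r: "le 0 r" "r \<in> sa_CC A (b*b)" "r*r = b*b"
  shows "b = r"
proof -
  have bA: "b \<in> A" using leA[OF b] by simp
  have rA: "r \<in> A" using leA[OF r(1)] by simp
  have rb: "r*b = b*r" using CC_comm[OF r(2) bA] by (simp add: mult.assoc)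
  define x where "x = b - r"
  have xA: "x \<in> A" unfolding x_def using bA rA diffA by blast
  have xb: "x*b = b*x" unfolding x_def using rb by (simp add: algebra_simps)
  have xr: "x*r = r*x" unfolding x_def using rb by (simp add: algebra_simps)
  have e1: "x*b*x = (x*x)*b" using xb by (metis mult.assoc)
  have e2: "x*r*x = (x*x)*r" using xr by (metis mult.assoc)
  have P1: "le 0 (x*b*x)" unfolding e1
    by (rule comm_pos[OF sqpos[OF xA] b]) (metis xb mult.assoc)
  have P2: "le 0 (x*r*x)" unfolding e2
    by (rule comm_pos[OF sqpos[OF xA] r(1)]) (metis xr mult.assoc)
  have z: "x*(b+r) = 0" unfolding x_def using rb r(3) by (simp add: algebra_simps)
  have "x*b*x + x*r*x = x*(b+r)*x" by (simp add: algebra_simps)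
  also have "\<dots> = 0" using z by simp
  finally have S: "x*b*x + x*r*x = 0" .
  have Z1: "x*b*x = 0" using pos_sum_zero[OF P1 P2 S] .
  have Z2: "x*r*x = 0" using pos_sum_zero[OF P2 P1] S by (simp add: add.commute)
  have "x*b = 0" using sa4[OF xA b Z1] by simp
  moreover have "x*r = 0" using sa4[OF xA r(1) Z2] by simp
  ultimately have "x*x = 0" unfolding x_def by (simp add: algebra_simps)
  then have "x = 0" using zero_sq xA by blast
  then show ?thesis unfolding x_def by simp
qed

lemma sqrt_props:
  assumes a: "le 0 a"
  shows "le 0 (sa_sqrt A le a) \<and> sa_sqrt A le a * sa_sqrt A le a = a \<and> sa_sqrt A le a \<in> sa_CC A a"
proof -
  obtain r where r: "le 0 r" "r \<in> sa_CC A a" "r * r = a" using sa5[OF a] by blast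
  have "sa_sqrt A le a = r" unfolding sa_sqrt_def
  proof (rule the_equality)
    show "le 0 r \<and> r * r = a" using r by simp
    fix b assume "le 0 b \<and> b * b = a"
    then show "b = r" using sqrt_wit[of b r] r by simp
  qed
  then show ?thesis using r by simp
qed

lemma sqrt_eq:
  assumes b: "le 0 b" shows "sa_sqrt A le (b*b) = b"
proof -
  obtain r where r: "le 0 r" "r \<in> sa_CC A (b*b)" "r * r = b*b" using sa5[OF sqpos] leA[OF b] by blast
  have br: "b = r" using sqrt_wit[OF b r] .
  show ?thesis unfolding sa_sqrt_def
  proof (rule the_equality)
    show "le 0 b \<and> b * b = b * b" using b by simp
    fix y assume y: "le 0 y \<and> y * y = b * b"
    have "y = r" by (rule sqrt_wit) (use y r in auto)
    then show "y = b" using br by simp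
  qed
qed

lemma proj_absorb:
  assumes e: "sa_proj A e" and f: "sa_proj A f" and ef: "e*f = e"
  shows "f*e = e"
proof -
  have eA: "e \<in> A" and fA: "f \<in> A" and ee: "e*e = e" and ff: "f*f = f"
    using e f unfolding sa_proj_def by auto
  have "(1-f)*e*(1-f) = (1-f)*(e - e*f)" by (simp add: algebra_simps)
  also have "\<dots> = 0" using ef by simp
  finally have "(1-f)*e*(1-f) = 0" .
  then have "(1-f)*e = 0" using sa4[OF diffA[OF oneA fA] proj_pos[OF e]] by blast
  then show ?thesis by (simp add: algebra_simps)
qed

lemma carrier_uniq:
  assumes x: "x \<in> A" and e: "sa_proj A e" and f: "sa_proj A f"
    and pe: "\<forall>b\<in>A. x*b = 0 \<longleftrightarrow> e*b = 0" and pf: "\<forall>b\<in>A. x*b = 0 \<longleftrightarrow> f*b = 0"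
  shows "e = f"
proof -
  have eA: "e \<in> A" and fA: "f \<in> A" and ee: "e*e = e" and ff: "f*f = f"
    using e f unfolding sa_proj_def by auto
  have "e*(1-e) = 0" using ee by (simp add: algebra_simps)
  then have "f*(1-e) = 0" using pe pf diffA[OF oneA eA] by blast
  then have "f*e = f" by (simp add: algebra_simps)
  then have 1: "e*f = f" using proj_absorb[OF f e] by simp
  have "f*(1-f) = 0" using ff by (simp add: algebra_simps)
  then have "e*(1-f) = 0" using pe pf diffA[OF oneA fA] by blast
  then have "e*f = e" by (simp add: algebra_simps)
  then show ?thesis using 1 by simp
qed

abbreviation car where "car x \<equiv> sa_carrier A x"

lemma carrier_props:
  assumes x: "x \<in> A"
  shows "sa_proj A (car x) \<and> (\<forall>b\<in>A. x*b = 0 \<longleftrightarrow> car x * b = 0)"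
proof -
  obtain e where e: "e \<in> A" "e*e = e" "\<forall>b\<in>A. x*b = 0 \<longleftrightarrow> e*b = 0" using sa6[OF x] by blast
  have ep: "sa_proj A e" using e unfolding sa_proj_def by simp
  have "car x = e" unfolding sa_carrier_def
  proof (rule the_equality)
    show "sa_proj A e \<and> (\<forall>b\<in>A. x * b = 0 \<longleftrightarrow> e * b = 0)" using ep e by simp
    fix f assume "sa_proj A f \<and> (\<forall>b\<in>A. x * b = 0 \<longleftrightarrow> f * b = 0)"
    then show "f = e" using carrier_uniq[OF x, of f e] ep e by blast
  qed
  then show ?thesis using ep e by simp
qed

lemma carrier_char:
  assumes x: "x \<in> A" and e: "sa_proj A e" and pe: "\<forall>b\<in>A. x*b = 0 \<longleftrightarrow> e*b = 0"
  shows "car x = e"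
  using carrier_uniq[OF x _ e _ pe] carrier_props[OF x] by blast

lemma carA: "x \<in> A \<Longrightarrow> car x \<in> A"
  using carrier_props unfolding sa_proj_def by blast

lemma car_idem: "x \<in> A \<Longrightarrow> car x * car x = car x"
  using carrier_props unfolding sa_proj_def by blast

lemma car_right: assumes x: "x \<in> A" shows "x * (1 - car x) = 0"
proof -
  have "car x * (1 - car x) = 0" using car_idem[OF x] by (simp add: algebra_simps)
  then show ?thesis using carrier_props[OF x] diffA[OF oneA carA[OF x]] by blast
qed

lemma car_left: assumes x: "x \<in> A" shows "(1 - car x) * x = 0"
proof -
  have "x * (1 - car x) * x = 0" using car_right[OF x] by simp
  then show ?thesis using sa4[OF x proj_pos[OF proj_compl]] carrier_props[OF x] by blast
qed

lemma car_CC: assumes x: "x \<in> A" shows "car x \<in> sa_CC A x"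
proof -
  let ?e = "car x"
  have eA: "?e \<in> A" using carA[OF x] .
  have ee: "?e * ?e = ?e" using car_idem[OF x] .
  have ee2: "\<And>z. ?e * (?e * z) = ?e * z" using ee by (metis mult.assoc)
  have xe: "x * (1 - ?e) = 0" using car_right[OF x] .
  have ex: "(1 - ?e) * x = 0" using car_left[OF x] .
  have "?e * y = y * ?e" if yA: "y \<in> A" and yx: "x * y = y * x" for y
  proof -
    have bA: "y*(1-?e) + (1-?e)*y \<in> A" using JA[OF yA diffA[OF oneA eA]] .
    have h: "x*(y*(1-?e)) = y*(x*(1-?e))" by (metis yx mult.assoc)
    have "x*(y*(1-?e) + (1-?e)*y) = x*(y*(1-?e)) + x*((1-?e)*y)" by (simp add: distrib_left)
    also have "\<dots> = y*(x*(1-?e)) + x*(1-?e)*y" using h by (simp add: mult.assoc)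
    also have "\<dots> = 0" using xe by simp
    finally have "?e * (y*(1-?e) + (1-?e)*y) = 0" using carrier_props[OF x] bA by blast
    then have e1: "?e*y*(1-?e) = 0" using ee by (simp add: algebra_simps ee2)
    define v where "v = ?e*y + y*?e - 2 *\<^sub>R (?e*y*?e)"
    have vA: "v \<in> A" unfolding v_def
      by (intro diffA JA scaleA tripA eA yA)
    have vv: "v = (1-?e)*y*?e"
      unfolding v_def using e1 by (simp add: algebra_simps scaleR_2 ee ee2)
    have "v*v = (1-?e)*y*(?e*(1-?e))*y*?e" unfolding vv by (simp add: mult.assoc)
    also have "\<dots> = 0" using ee by (simp add: algebra_simps ee2)
    finally have "v = 0" using zero_sq vA by blast
    then have e2: "(1-?e)*y*?e = 0" using vv by simp
    have "?e*y = ?e*y*?e" using e1 by (simp add: algebra_simps ee ee2)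
    moreover have "y*?e = ?e*y*?e" using e2 by (simp add: algebra_simps ee ee2)
    ultimately show ?thesis by simp
  qed
  then show ?thesis unfolding sa_CC_def sa_C_def using eA by auto
qed

lemma idem2: "(e::'a) * e = e \<Longrightarrow> e * (e * z) = e * z"
proof -
  assume h: "e * e = e"
  have "e * (e * z) = (e * e) * z" by (rule mult.assoc[symmetric])
  then show ?thesis using h by simp
qed

lemma zero2: "(e::'a) * f = 0 \<Longrightarrow> e * (f * z) = 0"
  by (simp add: mult.assoc[symmetric])

lemma compl_idem: "(e::'a) * e = e \<Longrightarrow> (1 - e) * (1 - e) = 1 - e"
  by (simp add: algebra_simps)

lemma sq_ann:
  assumes x: "x \<in> A" and b: "b \<in> A" and z: "x*x*b = 0"
  shows "x*b = 0"
proof -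
  let ?g = "car (x*x)"
  have xx: "x*x \<in> A" using sqA[OF x] .
  have gA: "?g \<in> A" using carA[OF xx] .
  have gg: "?g * ?g = ?g" using car_idem[OF xx] .
  have gx: "?g * x = x * ?g" using CC_comm[OF car_CC[OF xx] x] by (simp add: mult.assoc)
  have c1: "x * (1 - ?g) = (1 - ?g) * x" using gx by (simp add: algebra_simps)
  have yA: "x * (1 - ?g) \<in> A" using commA[OF x diffA[OF oneA gA] c1] .
  have "(x * (1 - ?g)) * (x * (1 - ?g)) = x * ((1 - ?g) * x) * (1 - ?g)" by (simp add: mult.assoc)
  also have "\<dots> = x * x * ((1 - ?g) * (1 - ?g))" using c1[symmetric] by (simp add: mult.assoc)
  also have "\<dots> = x * x * (1 - ?g)" using gg by (simp add: algebra_simps)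
  also have "\<dots> = 0" using car_right[OF xx] .
  finally have "x * (1 - ?g) = 0" using zero_sq yA by blast
  then have xg: "x = x * ?g" by (simp add: algebra_simps)
  have "?g * b = 0" using carrier_props[OF xx] b z by blast
  then have "x * ?g * b = 0" by (simp add: mult.assoc)
  then show ?thesis using xg by simp
qed

abbreviation ab where "ab x \<equiv> sa_abs A le x"

lemma abs_props:
  assumes x: "x \<in> A"
  shows "le 0 (ab x) \<and> ab x * ab x = x * x \<and> ab x \<in> sa_CC A (x*x) \<and> ab x * x = x * ab x \<and> ab x \<in> A"
proof -
  have P: "le 0 (ab x) \<and> ab x * ab x = x * x \<and> ab x \<in> sa_CC A (x*x)"
    unfolding sa_abs_def using sqrt_props[OF sqpos[OF x]] .
  have "ab x * x = x * ab x" using CC_comm[of "ab x" "x*x" x] P x by (simp add: mult.assoc)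
  then show ?thesis using P CC_A by blast
qed

definition signP where "signP x t \<longleftrightarrow> t \<in> A \<and> t * t = car x \<and> t \<in> sa_CC A x
       \<and> x = ab x * t \<and> x = t * ab x"

lemma signP_basic:
  assumes x: "x \<in> A" and t: "signP x t"
  shows "t * car x = t \<and> car x * t = t \<and> t * x = x * t"
proof -
  let ?e = "car x"
  have tA: "t \<in> A" and tt: "t*t = ?e" and tC: "t \<in> sa_CC A x" using t unfolding signP_def by auto
  have eA: "?e \<in> A" using carA[OF x] .
  have tx: "t * x = x * t" using CC_self[OF tC x] .
  have te: "t * ?e = ?e * t" unfolding tt[symmetric] by (simp add: mult.assoc)
  have c1: "t * (1 - ?e) = (1 - ?e) * t" using te by (simp add: algebra_simps)
  have yA: "t * (1 - ?e) \<in> A" using commA[OF tA diffA[OF oneA eA] c1] .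
  have "x * (t * (1 - ?e)) = t * (x * (1 - ?e))" using tx by (metis mult.assoc)
  also have "\<dots> = 0" using car_right[OF x] by simp
  finally have "?e * (t * (1 - ?e)) = 0" using carrier_props[OF x] yA by blast
  have "(t * (1 - ?e)) * (t * (1 - ?e)) = t * ((1 - ?e) * t) * (1 - ?e)" by (simp add: mult.assoc)
  also have "\<dots> = t * t * ((1 - ?e) * (1 - ?e))" using c1[symmetric] by (simp add: mult.assoc)
  also have "\<dots> = ?e * (1 - ?e)" using tt compl_idem[OF car_idem[OF x]] by simp
  also have "\<dots> = 0" using car_idem[OF x] by (simp add: algebra_simps)
  finally have "t * (1 - ?e) = 0" using zero_sq yA by blast
  then have "t * ?e = t" by (simp add: algebra_simps)
  then show ?thesis using te tx by simp
qed

lemma signP_uniq: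
  assumes x: "x \<in> A" and t: "signP x t" and t': "signP x t'"
  shows "t = t'"
proof -
  let ?e = "car x" and ?u = "ab x"
  have tA: "t \<in> A" and t'A: "t' \<in> A" and ut: "x = ?u * t" and ut': "x = ?u * t'" and xt: "x = t * ?u"
    using t t' unfolding signP_def by auto
  have tA': "t' \<in> A" using t'A .
  have wA: "t - t' \<in> A" using diffA[OF tA t'A] .
  have "?u * (t - t') = 0" using ut ut' by (simp add: algebra_simps)
  then have "(t * ?u) * (t - t') = 0" by (simp add: mult.assoc)
  then have "x * (t - t') = 0" by (simp only: xt[symmetric])
  then have "?e * (t - t') = 0" using carrier_props[OF x] wA by blast
  then have "?e * t = ?e * t'" by (simp add: algebra_simps)
  then show ?thesis using signP_basic[OF x t] signP_basic[OF x t'] by simp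
qed

lemma signP_exists:
  assumes x: "x \<in> A"
  shows "\<exists>t. signP x t"
proof -
  define u where "u = ab x"
  have uP: "le 0 u" "u * u = x * x" "u \<in> sa_CC A (x*x)" "u * x = x * u" "u \<in> A"
    using abs_props[OF x] unfolding u_def by auto
  define ap where "ap = (1/2) *\<^sub>R (u + x)"
  define am where "am = (1/2) *\<^sub>R (u - x)"
  have apA: "ap \<in> A" unfolding ap_def using addA[OF uP(5) x] scaleA by blast
  have amA: "am \<in> A" unfolding am_def using diffA[OF uP(5) x] scaleA by blast
  have uE: "u = ap + am" unfolding ap_def am_def by (simp add: algebra_simps scaleR_2[symmetric])
  have xE: "x = ap - am" unfolding ap_def am_def by (simp add: algebra_simps scaleR_2[symmetric])
  have "(u + x) * (u - x) = 0" using uP(2) uP(4) by (simp add: algebra_simps)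
  then have pm: "ap * am = 0" unfolding ap_def am_def by simp
  have "(u - x) * (u + x) = 0" using uP(2) uP(4) by (simp add: algebra_simps)
  then have mp: "am * ap = 0" unfolding ap_def am_def by simp
  define e where "e = car ap"
  define f where "f = car am"
  have eP: "sa_proj A e" "\<forall>b\<in>A. ap*b = 0 \<longleftrightarrow> e*b = 0" using carrier_props[OF apA] unfolding e_def by auto
  have fP: "sa_proj A f" "\<forall>b\<in>A. am*b = 0 \<longleftrightarrow> f*b = 0" using carrier_props[OF amA] unfolding f_def by auto
  have eA: "e \<in> A" and ee: "e*e = e" using eP(1) unfolding sa_proj_def by auto
  have fA: "f \<in> A" and ff: "f*f = f" using fP(1) unfolding sa_proj_def by auto
  have e_am: "e * am = 0" using eP(2) pm amA by blast
  have am_e: "am * e = 0" using ann_swap[OF amA proj_pos[OF eP(1)]] e_am ann_swap2 amA proj_pos[OF eP(1)] by blast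
  have fe: "f * e = 0" using fP(2) am_e eA by blast
  have ef: "e * f = 0" using ann_swap2[OF eA proj_pos[OF fP(1)] fe] .
  have f_ap: "f * ap = 0" using fP(2) mp apA by blast
  have ap_f: "ap * f = 0" using ann_swap2[OF apA proj_pos[OF fP(1)] f_ap] .
  have ap_e: "ap * e = ap" using car_right[OF apA] unfolding e_def by (simp add: algebra_simps)
  have am_f: "am * f = am" using car_right[OF amA] unfolding f_def by (simp add: algebra_simps)
  define t where "t = e - f"
  have tA: "t \<in> A" unfolding t_def using diffA[OF eA fA] .
  have ut: "u * t = x" unfolding t_def uE xE using ap_e am_f ap_f am_e by (simp add: algebra_simps)
  have comm: "e * y = y * e \<and> f * y = y * f" if yA: "y \<in> A" and yx: "x * y = y * x" for y
  proof -
    have "x * x * y = y * (x * x)" using yx by (metis mult.assoc)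
    then have uy: "u * y = y * u" using CC_comm[OF uP(3) yA] by simp
    have apy: "ap * y = y * ap" unfolding ap_def using uy yx by (simp add: algebra_simps)
    have amy: "am * y = y * am" unfolding am_def using uy yx by (simp add: algebra_simps)
    show ?thesis using CC_comm[OF car_CC[OF apA] yA apy] CC_comm[OF car_CC[OF amA] yA amy]
      unfolding e_def f_def by simp
  qed
  have tu: "t * u = x"
  proof -
    have "u * x = x * u" using uP(4) .
    then have "x * u = u * x" by simp
    have "e * u = u * e \<and> f * u = u * f" using comm[OF uP(5)] uP(4) by simp
    then have "t * u = u * t" unfolding t_def by (simp add: algebra_simps)
    then show ?thesis using ut by simp
  qed
  have tt: "t * t = e + f" unfolding t_def using ee ff ef fe by (simp add: algebra_simps)
  have efp: "sa_proj A (e + f)" unfolding sa_proj_def using addA[OF eA fA] ee ff ef fe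
    by (simp add: algebra_simps)
  have "\<forall>b\<in>A. x*b = 0 \<longleftrightarrow> (e + f)*b = 0"
  proof
    fix b assume bA: "b \<in> A"
    show "x*b = 0 \<longleftrightarrow> (e + f)*b = 0"
    proof
      assume xb: "x*b = 0"
      have "u*u*b = 0" using xb uP(2) by (metis mult.assoc mult_zero_right)
      then have ub: "u*b = 0" using sq_ann[OF uP(5) bA] by blast
      have "ap*b = 0" unfolding ap_def using ub xb by (simp add: algebra_simps)
      moreover have "am*b = 0" unfolding am_def using ub xb by (simp add: algebra_simps)
      ultimately show "(e + f)*b = 0" using eP(2) fP(2) bA by (simp add: distrib_right)
    next
      assume h: "(e + f)*b = 0"
      have "e*((e + f)*b) = 0" using h by simp
      then have "e*b = 0" using ee ef by (simp add: algebra_simps idem2 zero2)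
      moreover have "f*((e + f)*b) = 0" using h by simp
      then have "f*b = 0" using ff fe by (simp add: algebra_simps idem2 zero2)
      ultimately have "ap*b = 0" "am*b = 0" using eP(2) fP(2) bA by auto
      then show "x*b = 0" unfolding xE by (simp add: algebra_simps)
    qed
  qed
  then have carx: "car x = e + f" using carrier_char[OF x efp] by blast
  have tCC: "t \<in> sa_CC A x" unfolding sa_CC_def sa_C_def t_def
    using comm diffA[OF eA fA] by (auto simp: algebra_simps)
  have "signP x t" unfolding signP_def using tA tt carx tCC ut tu unfolding u_def by simp
  then show ?thesis by blast
qed

lemma signum_props:
  assumes x: "x \<in> A" shows "signP x (sa_signum A le x)"
proof -
  obtain t where t: "signP x t" using signP_exists[OF x] by blast
  have "sa_signum A le x = t" unfolding sa_signum_def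
  proof (rule the_equality)
    show "t \<in> A \<and> t * t = car x \<and> t \<in> sa_CC A x \<and> x = ab x * t \<and> x = t * ab x"
      using t unfolding signP_def .
    fix t' assume "t' \<in> A \<and> t' * t' = car x \<and> t' \<in> sa_CC A x \<and> x = ab x * t' \<and> x = t' * ab x"
    then have "signP x t'" unfolding signP_def .
    then show "t' = t" using signP_uniq[OF x _ t] by blast
  qed
  then show ?thesis using t by simp
qed

lemma polar_props:
  assumes x: "x \<in> A"
  shows "sa_polar_sym A le x \<in> A \<and> sa_polar_sym A le x * sa_polar_sym A le x = 1
    \<and> sa_polar_sym A le x \<in> sa_CC A x \<and> x = ab x * sa_polar_sym A le x
    \<and> ab x * sa_polar_sym A le x = sa_polar_sym A le x * ab x"
proof -
  define t where "t = sa_signum A le x"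
  let ?e = "car x" and ?u = "ab x"
  have tP: "signP x t" unfolding t_def using signum_props[OF x] .
  have tA: "t \<in> A" and tt: "t*t = ?e" and tC: "t \<in> sa_CC A x" and ut: "x = ?u * t" and tu: "x = t * ?u"
    using tP unfolding signP_def by auto
  have B: "t * ?e = t" "?e * t = t" "t * x = x * t" using signP_basic[OF x tP] by auto
  have eA: "?e \<in> A" using carA[OF x] .
  have ee: "?e * ?e = ?e" using car_idem[OF x] .
  have uA: "?u \<in> A" and uu: "?u * ?u = x * x" and ux: "?u * x = x * ?u" using abs_props[OF x] by auto
  have k: "sa_polar_sym A le x = t + (1 - ?e)" unfolding sa_polar_sym_def t_def ..
  have kA: "t + (1 - ?e) \<in> A" using addA[OF tA diffA[OF oneA eA]] .
  have kk: "(t + (1 - ?e)) * (t + (1 - ?e)) = 1"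
    using B tt ee by (simp add: algebra_simps)
  have tu2: "t * ?u = ?u * t" using CC_comm[OF tC uA ux[symmetric]] .
  have eu: "?e * ?u = ?u * ?e" unfolding tt[symmetric] using tu2 by (metis mult.assoc)
  have c1: "?u * (1 - ?e) = (1 - ?e) * ?u" using eu by (simp add: algebra_simps)
  have yA: "?u * (1 - ?e) \<in> A" using commA[OF uA diffA[OF oneA eA] c1] .
  have "(?u * (1 - ?e)) * (?u * (1 - ?e)) = ?u * ((1 - ?e) * ?u) * (1 - ?e)" by (simp add: mult.assoc)
  also have "\<dots> = ?u * ?u * ((1 - ?e) * (1 - ?e))" using c1[symmetric] by (simp add: mult.assoc)
  also have "\<dots> = x * (x * (1 - ?e))" using uu ee by (simp add: algebra_simps)
  also have "\<dots> = 0" using car_right[OF x] by simp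
  finally have u0: "?u * (1 - ?e) = 0" using zero_sq yA by blast
  have uk: "x = ?u * (t + (1 - ?e))" using ut u0 by (simp add: distrib_left)
  have kC: "t + (1 - ?e) \<in> sa_CC A x"
  proof -
    have "(t + (1 - ?e)) * y = y * (t + (1 - ?e))" if yA: "y \<in> A" and yx: "x * y = y * x" for y
    proof -
      have ty: "t * y = y * t" using CC_comm[OF tC yA yx] .
      have "?e * y = y * ?e" unfolding tt[symmetric] using ty by (metis mult.assoc)
      then show ?thesis using ty by (simp add: algebra_simps)
    qed
    then show ?thesis unfolding sa_CC_def sa_C_def using kA by auto
  qed
  have "?u * (t + (1 - ?e)) = (t + (1 - ?e)) * ?u" using tu2 c1 eu by (simp add: algebra_simps)
  then show ?thesis unfolding k using kA kk kC uk by simp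
qed

end

theorem theorem5p6:
  fixes A :: "'a::real_algebra_1 set" and le :: "'a \<Rightarrow> 'a \<Rightarrow> bool"
    and p q c s k :: 'a
  assumes SA: "synaptic_algebra A le"
    and p: "sa_proj A p" and q: "sa_proj A q"
    and c_def: "c = sa_sqrt A le (p * q * p + (1 - p) * (1 - q) * (1 - p))"
    and s_def: "s = sa_sqrt A le (p * (1 - q) * p + (1 - p) * q * (1 - p))"
    and k_def: "k = sa_polar_sym A le (p * q * (1 - p) + (1 - p) * q * p)"
  shows "q = c * c * p + c * s * k + s * s * (1 - p)
    \<and> p * q * p = c * c * p \<and> c * c * p = p * (c * c)
    \<and> (1 - p) * q * (1 - p) = s * s * (1 - p) \<and> s * s * (1 - p) = (1 - p) * (s * s)
    \<and> p * q * (1 - p) + (1 - p) * q * p = c * s * k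
    \<and> c * s * k = k * (c * s)
    \<and> c * s = sa_abs A le (p * q * (1 - p) + (1 - p) * q * p)
    \<and> k \<in> A \<and> k * k = 1
    \<and> c * s = s * c \<and> c * k = k * c \<and> s * k = k * s
    \<and> k \<in> sa_CC A (p * q * (1 - p) + (1 - p) * q * p)"
proof -
  interpret S: synalg A le
    using SA unfolding synalg_def synaptic_algebra_def by (elim conjE) (intro conjI; assumption)
  define X where "X = p * q * p + (1 - p) * (1 - q) * (1 - p)"
  define Y where "Y = p * (1 - q) * p + (1 - p) * q * (1 - p)"
  define d where "d = p * q * (1 - p) + (1 - p) * q * p"
  have pA: "p \<in> A" and pp: "p * p = p" using p unfolding sa_proj_def by auto
  have qA: "q \<in> A" and qq: "q * q = q" using q unfolding sa_proj_def by auto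
  note R = ring_ids[OF pp qq, folded X_def Y_def d_def]
  have p0: "le 0 p" using S.proj_pos[OF p] .
  have q0: "le 0 q" using S.proj_pos[OF q] .
  have p'0: "le 0 (1 - p)" using S.proj_pos[OF S.proj_compl[OF p]] .
  have q'0: "le 0 (1 - q)" using S.proj_pos[OF S.proj_compl[OF q]] .
  have X0: "le 0 X" unfolding X_def using S.pos_add S.sa3 p0 q0 p'0 q'0 by blast
  have Y0: "le 0 Y" unfolding Y_def using S.pos_add S.sa3 p0 q0 p'0 q'0 by blast
  have XA: "X \<in> A" using S.leA[OF X0] by simp
  have YA: "Y \<in> A" using S.leA[OF Y0] by simp
  have cP: "le 0 c" "c * c = X" "c \<in> sa_CC A X" using S.sqrt_props[OF X0] unfolding c_def X_def by auto
  have sP: "le 0 s" "s * s = Y" "s \<in> sa_CC A Y" using S.sqrt_props[OF Y0] unfolding s_def Y_def by auto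
  have cA: "c \<in> A" using S.leA[OF cP(1)] by simp
  have sA: "s \<in> A" using S.leA[OF sP(1)] by simp
  have dE: "d = q - p * q * p - (1 - p) * q * (1 - p)" unfolding d_def by (simp add: algebra_simps)
  have dA: "d \<in> A" unfolding dE
    using S.diffA S.tripA pA qA S.diffA[OF S.oneA pA] by metis
  have YX: "Y = 1 - X" using R(5) by (simp add: algebra_simps)
  have cd: "c * d = d * c" using S.CC_comm[OF cP(3) dA R(6)] .
  have Yd: "Y * d = d * Y" unfolding YX using R(6) by (simp add: algebra_simps)
  have sd: "s * d = d * s" using S.CC_comm[OF sP(3) dA Yd] .
  have XY: "X = 1 - Y" using R(5) by (simp add: algebra_simps)
  have sX: "Y * X = X * Y" unfolding XY by (simp add: algebra_simps)
  have "s * X = X * s" using S.CC_comm[OF sP(3) XA sX] by simp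
  then have cs: "c * s = s * c" using S.CC_comm[OF cP(3) sA] by simp
  have cs0: "le 0 (c * s)" using S.comm_pos[OF cP(1) sP(1) cs] .
  have "(c * s) * (c * s) = c * (s * c) * s" by (simp add: mult.assoc)
  also have "\<dots> = (c * c) * (s * s)" by (simp add: mult.assoc cs[symmetric])
  also have "\<dots> = d * d" using cP(2) sP(2) R(7) by simp
  finally have csd: "(c * s) * (c * s) = d * d" .
  have absd: "sa_abs A le d = c * s" unfolding sa_abs_def csd[symmetric] using S.sqrt_eq[OF cs0] .
  have K: "k \<in> A" "k * k = 1" "k \<in> sa_CC A d" "d = (c * s) * k" "(c * s) * k = k * (c * s)"
    using S.polar_props[OF dA] unfolding k_def[folded d_def] absd by auto
  have ck: "c * k = k * c" using S.CC_comm[OF K(3) cA cd[symmetric]] by simp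
  have sk: "s * k = k * s" using S.CC_comm[OF K(3) sA sd[symmetric]] by simp
  have main: "q = c * c * p + c * s * k + s * s * (1 - p)"
    using R(8) cP(2) sP(2) K(4) by simp
  show ?thesis unfolding d_def[symmetric]
    using main R(1-4) cP(2) sP(2) K ck sk cs absd by simp
qed

end
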